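(* In the adjacency array model, any bounded-error quantum algorithm that decides whether an $n$-vertex undirected graph is bipartite requires $\Omega(n)$ queries, and any bounded-error quantum algorithm that decides whether an $n$-vertex undirected graph contains a cycle requires $\Omega(n)$ queries.
   Context: Adjacency array model: the degrees $d_1,\dots,d_n$ of the vertices are given for free, and for each vertex $i$ there is an oracle for an injective array $f_i:[d_i]\to[n]$ listing its neighbours in an arbitrary fixed order; query complexity counts only queries to the arrays $f_i$ (which may be made in superposition). Bounded error means success probability at least $2/3$ on every input. *)

theory Defs
  imports Complex_Main
begin

text \<open>An input on n vertices (labelled 0..n-1) is a degree sequence deg and arrays f,
  where f i k (k < deg i) is the k-th neighbour of vertex i.\<close>

definition adj_array :: "nat \<Rightarrow> (nat \<Rightarrow> nat) \<Rightarrow> (nat \<Rightarrow> nat \<Rightarrow> nat) \<Rightarrow> bool" where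
  "adj_array n deg f \<longleftrightarrow>
     (\<forall>i. n \<le> i \<longrightarrow> deg i = 0) \<and>
     (\<forall>i<n. inj_on (f i) {..<deg i} \<and> f i ` {..<deg i} \<subseteq> {..<n}) \<and>
     (\<forall>i<n. \<forall>k<deg i. f i k \<noteq> i \<and> (\<exists>k'<deg (f i k). f (f i k) k' = i))"

definition adj_edge :: "(nat \<Rightarrow> nat) \<Rightarrow> (nat \<Rightarrow> nat \<Rightarrow> nat) \<Rightarrow> nat \<Rightarrow> nat \<Rightarrow> bool" where
  "adj_edge deg f i j \<longleftrightarrow> (\<exists>k<deg i. f i k = j)"

definition graph_bipartite :: "(nat \<Rightarrow> nat \<Rightarrow> bool) \<Rightarrow> bool" where
  "graph_bipartite E \<longleftrightarrow> (\<exists>S. \<forall>i j. E i j \<longrightarrow> (i \<in> S \<longleftrightarrow> j \<notin> S))"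

definition graph_has_cycle :: "(nat \<Rightarrow> nat \<Rightarrow> bool) \<Rightarrow> bool" where
  "graph_has_cycle E \<longleftrightarrow> (\<exists>vs. length vs \<ge> 3 \<and> distinct vs \<and>
      (\<forall>i. i + 1 < length vs \<longrightarrow> E (vs ! i) (vs ! (i + 1))) \<and> E (last vs) (hd vs))"

type_synonym qbas = "nat \<times> nat \<times> nat \<times> nat"
type_synonym qstate = "qbas \<Rightarrow> complex"
type_synonym qop = "qbas \<Rightarrow> qbas \<Rightarrow> complex"

text \<open>Computational basis |i, j, b, w>: i = vertex register, j = index register,
  b = answer register (all in {0..n-1}), w = workspace register in {0..m-1}.\<close>
definition qbasis :: "nat \<Rightarrow> nat \<Rightarrow> qbas set" where
  "qbasis n m = {..<n} \<times> {..<n} \<times> {..<n} \<times> {..<m}"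

definition apply_op :: "nat \<Rightarrow> nat \<Rightarrow> qop \<Rightarrow> qstate \<Rightarrow> qstate" where
  "apply_op n m U \<psi> = (\<lambda>x. if x \<in> qbasis n m then (\<Sum>y\<in>qbasis n m. U x y * \<psi> y) else 0)"

definition is_unitary :: "nat \<Rightarrow> nat \<Rightarrow> qop \<Rightarrow> bool" where
  "is_unitary n m U \<longleftrightarrow> (\<forall>x\<in>qbasis n m. \<forall>y\<in>qbasis n m.
      (\<Sum>z\<in>qbasis n m. cnj (U z x) * U z y) = (if x = y then 1 else 0))"

text \<open>Query operator: |i,j,b,w> \<mapsto> |i,j,(b + f_i(j)) mod n,w> if j < d_i, identity otherwise.\<close>
definition query_op :: "nat \<Rightarrow> nat \<Rightarrow> (nat \<Rightarrow> nat) \<Rightarrow> (nat \<Rightarrow> nat \<Rightarrow> nat) \<Rightarrow> qstate \<Rightarrow> qstate" where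
  "query_op n m deg f \<psi> = (\<lambda>(i, j, b, w).
     if (i, j, b, w) \<in> qbasis n m then
       (if j < deg i then \<psi> (i, j, (b + n - f i j) mod n, w) else \<psi> (i, j, b, w))
     else 0)"

definition init_state :: qstate where
  "init_state = (\<lambda>x. if x = (0, 0, 0, 0) then 1 else 0)"

text \<open>State after t queries: U_t O U_(t-1) O ... O U_0 |0>.  The unitaries may depend on
  the degree sequence (degrees are given for free).\<close>
fun run :: "nat \<Rightarrow> nat \<Rightarrow> (nat \<Rightarrow> (nat \<Rightarrow> nat) \<Rightarrow> qop) \<Rightarrow> (nat \<Rightarrow> nat) \<Rightarrow> (nat \<Rightarrow> nat \<Rightarrow> nat)
            \<Rightarrow> nat \<Rightarrow> qstate" where
  "run n m U deg f 0 = apply_op n m (U 0 deg) init_state"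
| "run n m U deg f (Suc t) = apply_op n m (U (Suc t) deg) (query_op n m deg f (run n m U deg f t))"

definition accept_prob :: "nat \<Rightarrow> nat \<Rightarrow> nat \<Rightarrow> (nat \<Rightarrow> (nat \<Rightarrow> nat) \<Rightarrow> qop)
     \<Rightarrow> ((nat \<Rightarrow> nat) \<Rightarrow> qbas set) \<Rightarrow> (nat \<Rightarrow> nat) \<Rightarrow> (nat \<Rightarrow> nat \<Rightarrow> nat) \<Rightarrow> real" where
  "accept_prob n m T U Acc deg f =
     (\<Sum>x\<in>qbasis n m \<inter> Acc deg. (cmod (run n m U deg f T x))\<^sup>2)"

definition decides_bounded_error :: "nat \<Rightarrow> ((nat \<Rightarrow> nat \<Rightarrow> bool) \<Rightarrow> bool) \<Rightarrow> nat \<Rightarrow> nat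
     \<Rightarrow> (nat \<Rightarrow> (nat \<Rightarrow> nat) \<Rightarrow> qop) \<Rightarrow> ((nat \<Rightarrow> nat) \<Rightarrow> qbas set) \<Rightarrow> bool" where
  "decides_bounded_error n P m T U Acc \<longleftrightarrow>
     (\<forall>deg t. t \<le> T \<longrightarrow> is_unitary n m (U t deg)) \<and>
     (\<forall>deg f. adj_array n deg f \<longrightarrow>
        (P (adj_edge deg f) \<longrightarrow> accept_prob n m T U Acc deg f \<ge> 2/3) \<and>
        (\<not> P (adj_edge deg f) \<longrightarrow> accept_prob n m T U Acc deg f \<le> 1/3))"

end

theory Submission
  imports Defs
begin


definition ip :: "nat \<Rightarrow> nat \<Rightarrow> qstate \<Rightarrow> qstate \<Rightarrow> complex" where
  "ip n m \<phi> \<psi> = (\<Sum>x\<in>qbasis n m. cnj (\<phi> x) * \<psi> x)"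

definition nr :: "nat \<Rightarrow> nat \<Rightarrow> nat set \<Rightarrow> qstate \<Rightarrow> real" where
  "nr n m V \<phi> = (\<Sum>x\<in>qbasis n m. if fst x \<in> V then (cmod (\<phi> x))\<^sup>2 else 0)"

lemma finite_qbasis[simp]: "finite (qbasis n m)"
  by (simp add: qbasis_def)

lemma unitary_ip:
  assumes U: "is_unitary n m U"
  shows "ip n m (apply_op n m U \<phi>) (apply_op n m U \<psi>) = ip n m \<phi> \<psi>"
proof -
  let ?Q = "qbasis n m"
  have "ip n m (apply_op n m U \<phi>) (apply_op n m U \<psi>) =
     (\<Sum>x\<in>?Q. cnj (\<Sum>y\<in>?Q. U x y * \<phi> y) * (\<Sum>z\<in>?Q. U x z * \<psi> z))"
    by (simp add: ip_def apply_op_def)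
  also have "\<dots> = (\<Sum>x\<in>?Q. \<Sum>y\<in>?Q. \<Sum>z\<in>?Q. cnj (\<phi> y) * \<psi> z * (cnj (U x y) * U x z))"
    unfolding cnj_sum sum_product by (intro sum.cong refl) (simp only: complex_cnj_mult mult_ac)
  also have "\<dots> = (\<Sum>y\<in>?Q. \<Sum>z\<in>?Q. \<Sum>x\<in>?Q. cnj (\<phi> y) * \<psi> z * (cnj (U x y) * U x z))"
    by (subst sum.swap) (rule sum.cong[OF refl], rule sum.swap)
  also have "\<dots> = (\<Sum>y\<in>?Q. \<Sum>z\<in>?Q. cnj (\<phi> y) * \<psi> z * (\<Sum>x\<in>?Q. cnj (U x y) * U x z))"
    by (simp add: sum_distrib_left)
  also have "\<dots> = (\<Sum>y\<in>?Q. \<Sum>z\<in>?Q. cnj (\<phi> y) * \<psi> z * (if y = z then 1 else 0))"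
    using U by (intro sum.cong refl) (simp add: is_unitary_def)
  also have "\<dots> = (\<Sum>y\<in>?Q. cnj (\<phi> y) * \<psi> y)"
    by (intro sum.cong refl) (simp add: if_distrib[of "\<lambda>x. _ * x"] sum.delta cong: if_cong)
  finally show ?thesis by (simp add: ip_def)
qed


definition sig :: "nat \<Rightarrow> (nat\<Rightarrow>nat) \<Rightarrow> (nat\<Rightarrow>nat\<Rightarrow>nat) \<Rightarrow> qbas \<Rightarrow> qbas" where
  "sig n D f x = (case x of (i,j,b,w) \<Rightarrow> (i, j, if j < D i then (b + n - f i j) mod n else b, w))"

lemma query_sig: "x \<in> qbasis n m \<Longrightarrow> query_op n m D f \<phi> x = \<phi> (sig n D f x)"
  by (cases x) (simp add: query_op_def sig_def)

lemma sig_in: "x \<in> qbasis n m \<Longrightarrow> sig n D f x \<in> qbasis n m"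
  by (cases x) (auto simp: sig_def qbasis_def)

lemma sig_fst[simp]: "fst (sig n D f x) = fst x"
  by (cases x) (simp add: sig_def)

lemma mod_sub_eq: "(b::nat) < n \<Longrightarrow> c < n \<Longrightarrow> (b + n - c) mod n = (if c \<le> b then b - c else b + n - c)"
proof (cases "c \<le> b")
  case True
  assume "b < n"
  then have lt: "b - c < n" using True by auto
  have e: "b + n - c = (b - c) + n" using True by simp
  have "(b + n - c) mod n = b - c" by (simp only: e mod_add_self2 mod_less[OF lt])
  then show ?thesis using True by simp
next
  case False
  assume "b < n" "c < n"
  then show ?thesis using False by simp
qed

lemma sig_inj:
  assumes f: "\<forall>i<n. \<forall>j<D i. f i j < n"
  shows "inj_on (sig n D f) (qbasis n m)"
proof (rule inj_onI)
  fix x y assume x: "x \<in> qbasis n m" and y: "y \<in> qbasis n m" and e: "sig n D f x = sig n D f y"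
  obtain i j b w where xx: "x = (i,j,b,w)" by (cases x) auto
  obtain i' j' b' w' where yy: "y = (i',j',b',w')" by (cases y) auto
  from e have ii: "i' = i" "j' = j" "w' = w" by (auto simp: xx yy sig_def)
  have bn: "b < n" "b' < n" "i < n" using x y by (auto simp: xx yy qbasis_def ii)
  show "x = y"
  proof (cases "j < D i")
    case True
    then have c: "f i j < n" using f bn by auto
    have "(b + n - f i j) mod n = (b' + n - f i j) mod n" using e True by (simp add: xx yy sig_def ii)
    then have "b = b'" using mod_sub_eq[OF bn(1) c] mod_sub_eq[OF bn(2) c] bn c
      by (auto split: if_splits)
    then show ?thesis by (simp add: xx yy ii)
  next
    case False
    then show ?thesis using e by (simp add: xx yy sig_def ii)
  qed
qed

lemma sum_sig:
  assumes f: "\<forall>i<n. \<forall>j<D i. f i j < n"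
  shows "(\<Sum>x\<in>qbasis n m. if fst x \<in> V then g (sig n D f x) else 0) =
         (\<Sum>x\<in>qbasis n m. if fst x \<in> V then (g x :: 'a :: comm_monoid_add) else 0)"
proof -
  let ?A = "{x \<in> qbasis n m. fst x \<in> V}"
  have inj: "inj_on (sig n D f) ?A" using sig_inj[OF f] by (rule inj_on_subset) auto
  have "sig n D f ` ?A \<subseteq> ?A" using sig_in by auto
  hence im: "sig n D f ` ?A = ?A" using endo_inj_surj[OF _ _ inj] by auto
  have "(\<Sum>x\<in>?A. g (sig n D f x)) = (\<Sum>x\<in>?A. g x)"
    using sum.reindex[OF inj, of g] im by simp
  thus ?thesis by (simp add: sum.inter_filter)
qed

lemma amgm: "(a::real) * b \<le> (a\<^sup>2 + b\<^sup>2) / 2"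
proof -
  have "0 \<le> (a - b)\<^sup>2" by simp
  thus ?thesis by (simp add: power2_diff)
qed

lemma amgm2: "(a::real) * b * 2 \<le> a\<^sup>2 + b\<^sup>2"
  using amgm[of a b] by simp


lemma split_V: "(\<Sum>x\<in>qbasis n m. k x) =
   (\<Sum>x\<in>qbasis n m. if fst x \<in> V then k x else 0) + (\<Sum>x\<in>qbasis n m. if fst x \<in> - V then (k x :: 'a :: comm_monoid_add) else 0)"
  by (simp add: sum.distrib[symmetric]) (intro sum.cong refl, simp)

lemma sum_half: "(\<Sum>x\<in>A. if P x then ((a x::real) + b x) / 2 else 0) =
   ((\<Sum>x\<in>A. if P x then a x else 0) + (\<Sum>x\<in>A. if P x then b x else 0)) / 2"
proof -
  have "(\<Sum>x\<in>A. if P x then ((a x::real) + b x) / 2 else 0) =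
     (\<Sum>x\<in>A. (if P x then a x else 0) / 2 + (if P x then b x else 0) / 2)"
    by (intro sum.cong refl) auto
  also have "\<dots> = ((\<Sum>x\<in>A. if P x then a x else 0) + (\<Sum>x\<in>A. if P x then b x else 0)) / 2"
    by (simp only: sum.distrib sum_divide_distrib[symmetric] add_divide_distrib)
  finally show ?thesis .
qed

lemma query_diff:
  assumes f: "\<forall>i<n. \<forall>j<D i. f i j < n" and f': "\<forall>i<n. \<forall>j<D i. f' i j < n"
    and agree: "\<forall>i<n. i \<notin> V \<longrightarrow> (\<forall>j<D i. f i j = f' i j)"
  shows "cmod (ip n m (query_op n m D f \<phi>) (query_op n m D f' \<phi>') - ip n m \<phi> \<phi>')
           \<le> nr n m V \<phi> + nr n m V \<phi>'"
proof -
  let ?Q = "qbasis n m" let ?s = "sig n D f" let ?s' = "sig n D f'"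
  define h where "h x = cnj (\<phi> (?s x)) * \<phi>' (?s' x)" for x
  define g where "g x = cnj (\<phi> x) * \<phi>' x" for x
  have ipO: "ip n m (query_op n m D f \<phi>) (query_op n m D f' \<phi>') = (\<Sum>x\<in>?Q. h x)"
    by (simp add: ip_def query_sig h_def)
  have ipg: "ip n m \<phi> \<phi>' = (\<Sum>x\<in>?Q. g x)" by (simp add: ip_def g_def)
  have eqout: "?s' x = ?s x" if "x\<in>?Q" "fst x \<notin> V" for x
    using agree that by (cases x) (auto simp: sig_def qbasis_def)
  have out: "(\<Sum>x\<in>?Q. if fst x \<in> - V then h x else 0) = (\<Sum>x\<in>?Q. if fst x \<in> - V then g x else 0)"
  proof -
    have "(\<Sum>x\<in>?Q. if fst x \<in> - V then h x else 0) = (\<Sum>x\<in>?Q. if fst x \<in> -V then g (?s x) else 0)"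
      by (intro sum.cong refl) (auto simp: h_def g_def eqout)
    also have "\<dots> = (\<Sum>x\<in>?Q. if fst x \<in> -V then g x else 0)" by (rule sum_sig[OF f])
    finally show ?thesis .
  qed
  have diff: "ip n m (query_op n m D f \<phi>) (query_op n m D f' \<phi>') - ip n m \<phi> \<phi>'
     = (\<Sum>x\<in>?Q. if fst x \<in> V then h x else 0) - (\<Sum>x\<in>?Q. if fst x \<in> V then g x else 0)"
    unfolding ipO ipg using split_V[of h n m V] split_V[of g n m V] out by simp
  let ?a = "\<lambda>x. (cmod (\<phi> x))\<^sup>2" let ?b = "\<lambda>x. (cmod (\<phi>' x))\<^sup>2"
  have "cmod (\<Sum>x\<in>?Q. if fst x \<in> V then h x else 0) \<le> (\<Sum>x\<in>?Q. cmod (if fst x \<in> V then h x else 0))"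
    by (rule norm_sum)
  also have "\<dots> \<le> (\<Sum>x\<in>?Q. if fst x \<in> V then (?a (?s x) + ?b (?s' x)) / 2 else 0)"
    by (intro sum_mono) (auto simp: h_def norm_mult amgm amgm2)
  also have "\<dots> = ((\<Sum>x\<in>?Q. if fst x \<in> V then ?a (?s x) else 0) + (\<Sum>x\<in>?Q. if fst x \<in> V then ?b (?s' x) else 0)) / 2"
    by (rule sum_half)
  also have "\<dots> = (nr n m V \<phi> + nr n m V \<phi>') / 2"
    unfolding nr_def using sum_sig[OF f, of V ?a m] sum_sig[OF f', of V ?b m] by simp
  finally have h1: "cmod (\<Sum>x\<in>?Q. if fst x \<in> V then h x else 0) \<le> (nr n m V \<phi> + nr n m V \<phi>') / 2" .
  have "cmod (\<Sum>x\<in>?Q. if fst x \<in> V then g x else 0) \<le> (\<Sum>x\<in>?Q. cmod (if fst x \<in> V then g x else 0))"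
    by (rule norm_sum)
  also have "\<dots> \<le> (\<Sum>x\<in>?Q. if fst x \<in> V then (?a x + ?b x) / 2 else 0)"
    by (intro sum_mono) (auto simp: g_def norm_mult amgm amgm2)
  also have "\<dots> = (nr n m V \<phi> + nr n m V \<phi>') / 2"
    unfolding nr_def by (rule sum_half)
  finally have h2: "cmod (\<Sum>x\<in>?Q. if fst x \<in> V then g x else 0) \<le> (nr n m V \<phi> + nr n m V \<phi>') / 2" .
  have "cmod ((\<Sum>x\<in>?Q. if fst x \<in> V then h x else 0) - (\<Sum>x\<in>?Q. if fst x \<in> V then g x else 0))
     \<le> cmod (\<Sum>x\<in>?Q. if fst x \<in> V then h x else 0) + cmod (\<Sum>x\<in>?Q. if fst x \<in> V then g x else 0)"
    by (rule norm_triangle_ineq4)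
  also have "\<dots> \<le> (nr n m V \<phi> + nr n m V \<phi>') / 2 + (nr n m V \<phi> + nr n m V \<phi>') / 2"
    using h1 h2 by (rule add_mono)
  finally show ?thesis unfolding diff by simp
qed

lemma nr_empty[simp]: "nr n m {} \<phi> = 0" by (simp add: nr_def)

lemma ip_self: "ip n m \<phi> \<phi> = of_real (\<Sum>x\<in>qbasis n m. (cmod (\<phi> x))\<^sup>2)"
  unfolding ip_def of_real_sum by (intro sum.cong refl) (subst complex_norm_square, simp add: mult.commute)

lemma query_norm:
  assumes f: "\<forall>i<n. \<forall>j<D i. f i j < n"
  shows "ip n m (query_op n m D f \<phi>) (query_op n m D f \<phi>) = ip n m \<phi> \<phi>"
  using query_diff[OF f f, of "{}" m \<phi> \<phi>] by simp

lemma run_norm: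
  assumes U: "\<forall>t\<le>T. is_unitary n m (U t D)" and f: "\<forall>i<n. \<forall>j<D i. f i j < n"
    and nm: "0 < n" "0 < m"
  shows "t \<le> T \<Longrightarrow> ip n m (run n m U D f t) (run n m U D f t) = 1"
proof (induction t)
  case 0
  have "ip n m init_state init_state = (\<Sum>x\<in>qbasis n m. if x = (0,0,0,0) then 1 else 0)"
    unfolding ip_def by (intro sum.cong refl) (simp add: init_state_def)
  also have "\<dots> = 1" using nm by (simp add: qbasis_def)
  finally show ?case using U unitary_ip by simp
next
  case (Suc t)
  then show ?case using U unitary_ip query_norm[OF f] by simp
qed


lemma amgm3: "(a::real) * b \<le> 1/3 * a\<^sup>2 + 3/4 * b\<^sup>2"
proof -
  have e: "1/3 * a\<^sup>2 + 3/4 * b\<^sup>2 - a * b = 1/3 * (a - 3/2 * b)\<^sup>2"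
    by (simp add: power2_eq_square algebra_simps)
  have "0 \<le> 1/3 * (a - 3/2 * b)\<^sup>2" by simp
  thus ?thesis using e by linarith
qed

lemma amgm4: "(a::real) * b \<le> 3/4 * a\<^sup>2 + 1/3 * b\<^sup>2"
  using amgm3[of b a] by (simp add: mult.commute add.commute)

lemma fin_bound:
  assumes fin: "finite Q"
    and n1: "(\<Sum>x\<in>Q. (cmod (\<psi> x))\<^sup>2) = 1" and n2: "(\<Sum>x\<in>Q. (cmod (\<phi> x))\<^sup>2) = 1"
    and p: "(\<Sum>x\<in>Q \<inter> A. (cmod (\<psi> x))\<^sup>2) \<ge> 2/3" and q: "(\<Sum>x\<in>Q \<inter> A. (cmod (\<phi> x))\<^sup>2) \<le> 1/3"
  shows "cmod (\<Sum>x\<in>Q. cnj (\<psi> x) * \<phi> x) \<le> 17/18"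
proof -
  let ?a = "\<lambda>x. cmod (\<psi> x)" let ?b = "\<lambda>x. cmod (\<phi> x)"
  have s1: "(\<Sum>x\<in>Q. ?a x ^ 2) = (\<Sum>x\<in>Q \<inter> A. ?a x ^ 2) + (\<Sum>x\<in>Q - A. ?a x ^ 2)"
    using fin by (rule sum.Int_Diff)
  have s2: "(\<Sum>x\<in>Q. ?b x ^ 2) = (\<Sum>x\<in>Q \<inter> A. ?b x ^ 2) + (\<Sum>x\<in>Q - A. ?b x ^ 2)"
    using fin by (rule sum.Int_Diff)
  have "cmod (\<Sum>x\<in>Q. cnj (\<psi> x) * \<phi> x) \<le> (\<Sum>x\<in>Q. cmod (cnj (\<psi> x) * \<phi> x))"
    by (rule norm_sum)
  also have "\<dots> = (\<Sum>x\<in>Q. ?a x * ?b x)" by (simp add: norm_mult)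
  also have "\<dots> = (\<Sum>x\<in>Q \<inter> A. ?a x * ?b x) + (\<Sum>x\<in>Q - A. ?a x * ?b x)"
    using fin by (rule sum.Int_Diff)
  also have "\<dots> \<le> (\<Sum>x\<in>Q \<inter> A. 1/3 * ?a x ^ 2 + 3/4 * ?b x ^ 2) + (\<Sum>x\<in>Q - A. 3/4 * ?a x ^ 2 + 1/3 * ?b x ^ 2)"
    by (intro add_mono sum_mono) (rule amgm3, rule amgm4)
  also have "\<dots> = 1/3 * (\<Sum>x\<in>Q \<inter> A. ?a x ^ 2) + 3/4 * (\<Sum>x\<in>Q \<inter> A. ?b x ^ 2)
      + 3/4 * (\<Sum>x\<in>Q - A. ?a x ^ 2) + 1/3 * (\<Sum>x\<in>Q - A. ?b x ^ 2)"
    by (simp add: sum.distrib sum_distrib_left)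
  also have "\<dots> \<le> 17/18" using s1 s2 n1 n2 p q by linarith
  finally show ?thesis .
qed

lemma ip_cnj: "ip n m \<phi> \<psi> = cnj (ip n m \<psi> \<phi>)"
  by (simp add: ip_def mult.commute)

lemma Vbd: "(\<Sum>k<N. nr n m {i. i div 2 = k \<or> i div 2 = Suc k} \<phi>) \<le> 2 * (\<Sum>x\<in>qbasis n m. (cmod (\<phi> x))\<^sup>2)"
proof -
  let ?a = "\<lambda>x. (cmod (\<phi> x))\<^sup>2"
  have "(\<Sum>k<N. nr n m {i. i div 2 = k \<or> i div 2 = Suc k} \<phi>) =
     (\<Sum>x\<in>qbasis n m. \<Sum>k<N. if fst x div 2 = k \<or> fst x div 2 = Suc k then ?a x else 0)"
    unfolding nr_def by (subst sum.swap) simp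
  also have "\<dots> \<le> (\<Sum>x\<in>qbasis n m. 2 * ?a x)"
  proof (rule sum_mono)
    fix x :: qbas
    let ?c = "fst x div 2"
    have "(\<Sum>k<N. if ?c = k \<or> ?c = Suc k then ?a x else 0)
        \<le> (\<Sum>k<N. (if k = ?c then ?a x else 0) + (if k = ?c - 1 then ?a x else 0))"
      by (rule sum_mono) auto
    also have "\<dots> \<le> ?a x + ?a x" by (simp add: sum.distrib)
    finally show "(\<Sum>k<N. if ?c = k \<or> ?c = Suc k then ?a x else 0) \<le> 2 * ?a x" by simp
  qed
  also have "\<dots> = 2 * (\<Sum>x\<in>qbasis n m. ?a x)" by (simp add: sum_distrib_left)
  finally show ?thesis .
qed


definition flip :: "nat \<Rightarrow> nat set \<Rightarrow> nat set" where
  "flip k s = (if k \<in> s then s - {k} else insert k s)"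

lemma flip_flip[simp]: "flip k (flip k s) = s"
  by (auto simp: flip_def)

lemma flip_sub: "s \<subseteq> {..<N} \<Longrightarrow> k < N \<Longrightarrow> flip k s \<subseteq> {..<N}"
  by (auto simp: flip_def)

lemma flip_reindex:
  assumes k: "k < N"
  shows "(\<Sum>s\<in>Pow {..<N}. g (flip k s)) = (\<Sum>s\<in>Pow {..<N}. (g s :: real))"
proof -
  have inj: "inj_on (flip k) (Pow {..<N})" by (metis flip_flip inj_onI)
  have im: "flip k ` Pow {..<N} = Pow {..<N}"
  proof
    show "flip k ` Pow {..<N} \<subseteq> Pow {..<N}" using flip_sub k by auto
    show "Pow {..<N} \<subseteq> flip k ` Pow {..<N}"
    proof
      fix s assume "s \<in> Pow {..<N}"
      then have "flip k s \<in> Pow {..<N}" using flip_sub k by auto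
      then show "s \<in> flip k ` Pow {..<N}" by (metis flip_flip image_eqI)
    qed
  qed
  show ?thesis using sum.reindex[OF inj, of g] im by simp
qed

lemma adj_range: "adj_array n D f \<Longrightarrow> \<forall>i<n. \<forall>j<D i. f i j < n"
  by (auto simp: adj_array_def)



lemma lin_aux: "(x::real) \<le> ws \<Longrightarrow> x = wt - a - b \<Longrightarrow> a \<le> 2*c \<Longrightarrow> b = a \<Longrightarrow>
   p - 4*t*c \<le> wt \<Longrightarrow> p - 4*(t+1)*c \<le> ws"
  by (simp add: algebra_simps)

lemma generic:
  fixes F :: "nat set \<Rightarrow> nat \<Rightarrow> nat \<Rightarrow> nat" and D :: "nat \<Rightarrow> nat"
  assumes adj: "\<forall>s\<subseteq>{..<N}. adj_array n D (F s)"
    and loc: "\<forall>s\<subseteq>{..<N}. \<forall>k<N. \<forall>i<n. i \<notin> {i. i div 2 = k \<or> i div 2 = Suc k} \<longrightarrow>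
                  (\<forall>j<D i. F s i j = F (flip k s) i j)"
    and Pd: "\<forall>s\<subseteq>{..<N}. \<forall>k<N. P (adj_edge D (F s)) \<noteq> P (adj_edge D (F (flip k s)))"
    and dec: "decides_bounded_error n P m T U Acc"
    and N: "0 < N" and n: "0 < n"
  shows "real N \<le> 72 * real T"
proof -
  let ?S = "Pow {..<N}"
  let ?Q = "qbasis n m"
  define V where "V k = {i. i div 2 = k \<or> i div 2 = Suc k}" for k :: nat
  define \<psi> where "\<psi> s t = run n m U D (F s) t" for s t
  have Uu: "\<forall>t\<le>T. is_unitary n m (U t D)" using dec by (simp add: decides_bounded_error_def)
  have rng: "\<forall>i<n. \<forall>j<D i. F s i j < n" if "s \<subseteq> {..<N}" for s
    by (rule adj_range) (use adj that in simp)
  have acc: "(P (adj_edge D (F s)) \<longrightarrow> accept_prob n m T U Acc D (F s) \<ge> 2/3) \<and>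
        (\<not> P (adj_edge D (F s)) \<longrightarrow> accept_prob n m T U Acc D (F s) \<le> 1/3)" if "s \<subseteq> {..<N}" for s
    using dec adj that by (simp add: decides_bounded_error_def)
  have m: "0 < m"
  proof (rule ccontr)
    assume "\<not> 0 < m"
    then have Q0: "?Q = {}" by (simp add: qbasis_def)
    have s0: "{} \<subseteq> {..<N}" "flip 0 {} \<subseteq> {..<N}" using N by (auto simp: flip_def)
    have "P (adj_edge D (F {})) \<or> P (adj_edge D (F (flip 0 {})))" using Pd[rule_format, of "{}" 0] N by auto
    then show False using acc[OF s0(1)] acc[OF s0(2)] Q0 by (auto simp: accept_prob_def)
  qed
  have norm1: "(\<Sum>x\<in>?Q. (cmod (\<psi> s t x))\<^sup>2) = 1" if "s \<subseteq> {..<N}" "t \<le> T" for s t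
  proof -
    have "ip n m (\<psi> s t) (\<psi> s t) = 1"
      unfolding \<psi>_def using run_norm[of T n m U D "F s" t, OF Uu rng[OF that(1)] n m that(2)] .
    then have "(of_real (\<Sum>x\<in>?Q. (cmod (\<psi> s t x))\<^sup>2) :: complex) = 1" by (simp only: ip_self)
    then show ?thesis by (simp only: of_real_eq_1_iff)
  qed
  define W where "W t = (\<Sum>s\<in>?S. \<Sum>k<N. cmod (ip n m (\<psi> s t) (\<psi> (flip k s) t)))" for t
  have prog: "t \<le> T \<Longrightarrow> W t \<ge> real (card ?S) * real N - 4 * real t * real (card ?S)" for t
  proof (induction t)
    case 0
    have "ip n m (\<psi> s 0) (\<psi> s' 0) = 1" for s s'
    proof -
      have "\<psi> s' 0 = \<psi> {} 0" "\<psi> s 0 = \<psi> {} 0" by (simp_all add: \<psi>_def)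
      then show ?thesis using norm1[of "{}" 0] ip_self[of n m "\<psi> {} 0"] by simp
    qed
    then have "W 0 = real (card ?S) * real N" by (simp add: W_def)
    then show ?case by simp
  next
    case (Suc t)
    then have tT: "t \<le> T" by simp
    have uS: "is_unitary n m (U (Suc t) D)" using Uu Suc.prems by simp
    have step: "cmod (ip n m (\<psi> s (Suc t)) (\<psi> (flip k s) (Suc t))) \<ge>
       cmod (ip n m (\<psi> s t) (\<psi> (flip k s) t)) - nr n m (V k) (\<psi> s t) - nr n m (V k) (\<psi> (flip k s) t)"
      if s: "s \<in> ?S" and k: "k \<in> {..<N}" for s k
    proof -
      have s': "s \<subseteq> {..<N}" "flip k s \<subseteq> {..<N}" using s k flip_sub by auto
      let ?A = "ip n m (\<psi> s t) (\<psi> (flip k s) t)"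
      let ?B = "ip n m (query_op n m D (F s) (\<psi> s t)) (query_op n m D (F (flip k s)) (\<psi> (flip k s) t))"
      have e1: "ip n m (\<psi> s (Suc t)) (\<psi> (flip k s) (Suc t)) = ?B"
        unfolding \<psi>_def run.simps by (rule unitary_ip[OF uS])
      have e2: "cmod (?B - ?A) \<le> nr n m (V k) (\<psi> s t) + nr n m (V k) (\<psi> (flip k s) t)"
        by (rule query_diff[OF rng[OF s'(1)] rng[OF s'(2)]]) (use loc s'(1) k in \<open>unfold V_def, blast\<close>)
      have e3: "cmod ?A - cmod ?B \<le> cmod (?A - ?B)" by (rule norm_triangle_ineq2)
      have e4: "cmod (?A - ?B) = cmod (?B - ?A)" by (rule norm_minus_commute)
      show ?thesis unfolding e1 using e2 e3 e4 by linarith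
    qed
    have A: "(\<Sum>s\<in>?S. \<Sum>k<N. nr n m (V k) (\<psi> s t)) \<le> 2 * real (card ?S)"
    proof -
      have "(\<Sum>s\<in>?S. \<Sum>k<N. nr n m (V k) (\<psi> s t)) \<le> (\<Sum>s\<in>?S. 2)"
      proof (rule sum_mono)
        fix s assume "s \<in> ?S"
        then show "(\<Sum>k<N. nr n m (V k) (\<psi> s t)) \<le> 2"
          using Vbd[where N=N and n=n and m=m and \<phi>="\<psi> s t"] norm1[of s t] tT by (simp add: V_def)
      qed
      then show ?thesis by simp
    qed
    have B: "(\<Sum>s\<in>?S. \<Sum>k<N. nr n m (V k) (\<psi> (flip k s) t)) = (\<Sum>s\<in>?S. \<Sum>k<N. nr n m (V k) (\<psi> s t))"
    proof -
      have "(\<Sum>s\<in>?S. \<Sum>k<N. nr n m (V k) (\<psi> (flip k s) t)) = (\<Sum>k<N. \<Sum>s\<in>?S. nr n m (V k) (\<psi> (flip k s) t))"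
        by (rule sum.swap)
      also have "\<dots> = (\<Sum>k<N. \<Sum>s\<in>?S. nr n m (V k) (\<psi> s t))"
      proof (rule sum.cong[OF refl])
        fix k assume "k \<in> {..<N}"
        then show "(\<Sum>s\<in>?S. nr n m (V k) (\<psi> (flip k s) t)) = (\<Sum>s\<in>?S. nr n m (V k) (\<psi> s t))"
          using flip_reindex[of k N "\<lambda>s. nr n m (V k) (\<psi> s t)"] by simp
      qed
      also have "\<dots> = (\<Sum>s\<in>?S. \<Sum>k<N. nr n m (V k) (\<psi> s t))" by (rule sum.swap)
      finally show ?thesis .
    qed
    have h: "(\<Sum>s\<in>?S. \<Sum>k<N. cmod (ip n m (\<psi> s t) (\<psi> (flip k s) t)) - nr n m (V k) (\<psi> s t) - nr n m (V k) (\<psi> (flip k s) t)) \<le> W (Suc t)"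
      unfolding W_def by (intro sum_mono) (use step in auto)
    have e: "(\<Sum>s\<in>?S. \<Sum>k<N. cmod (ip n m (\<psi> s t) (\<psi> (flip k s) t)) - nr n m (V k) (\<psi> s t) - nr n m (V k) (\<psi> (flip k s) t))
       = W t - (\<Sum>s\<in>?S. \<Sum>k<N. nr n m (V k) (\<psi> s t)) - (\<Sum>s\<in>?S. \<Sum>k<N. nr n m (V k) (\<psi> (flip k s) t))"
      by (simp add: W_def sum_subtractf)
    have IH: "real (card ?S) * real N - 4 * real t * real (card ?S) \<le> W t" using Suc.IH[OF tT] .
    show ?case using lin_aux[OF h e A B IH] by (simp add: add.commute)
  qed
  have fin: "W T \<le> real (card ?S) * real N * (17/18)"
  proof -
    have "W T \<le> (\<Sum>s\<in>?S. \<Sum>k<N. 17/18)"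
      unfolding W_def
    proof (intro sum_mono)
      fix s k assume s: "s \<in> ?S" and k: "k \<in> {..<N}"
      have s': "s \<subseteq> {..<N}" "flip k s \<subseteq> {..<N}" using s k flip_sub by auto
      have a1: "accept_prob n m T U Acc D (F s) = (\<Sum>x\<in>?Q \<inter> Acc D. (cmod (\<psi> s T x))\<^sup>2)"
        and a2: "accept_prob n m T U Acc D (F (flip k s)) = (\<Sum>x\<in>?Q \<inter> Acc D. (cmod (\<psi> (flip k s) T x))\<^sup>2)"
        by (simp_all add: accept_prob_def \<psi>_def)
      have kN: "k < N" using k by simp
      have d: "P (adj_edge D (F s)) \<noteq> P (adj_edge D (F (flip k s)))" using Pd s'(1) kN by blast
      show "cmod (ip n m (\<psi> s T) (\<psi> (flip k s) T)) \<le> 17/18"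
      proof (cases "P (adj_edge D (F s))")
        case True
        then have nP: "\<not> P (adj_edge D (F (flip k s)))" using d by simp
        have p1: "2/3 \<le> (\<Sum>x\<in>?Q \<inter> Acc D. (cmod (\<psi> s T x))\<^sup>2)"
          using acc[OF s'(1)] True unfolding a1 by blast
        have q1: "(\<Sum>x\<in>?Q \<inter> Acc D. (cmod (\<psi> (flip k s) T x))\<^sup>2) \<le> 1/3"
          using acc[OF s'(2)] nP unfolding a2 by blast
        show ?thesis unfolding ip_def
          by (rule fin_bound[OF finite_qbasis norm1[OF s'(1) order.refl] norm1[OF s'(2) order.refl] p1 q1])
      next
        case False
        then have nP: "P (adj_edge D (F (flip k s)))" using d by simp
        have p1: "2/3 \<le> (\<Sum>x\<in>?Q \<inter> Acc D. (cmod (\<psi> (flip k s) T x))\<^sup>2)"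
          using acc[OF s'(2)] nP unfolding a2 by blast
        have q1: "(\<Sum>x\<in>?Q \<inter> Acc D. (cmod (\<psi> s T x))\<^sup>2) \<le> 1/3"
          using acc[OF s'(1)] False unfolding a1 by blast
        have "cmod (ip n m (\<psi> (flip k s) T) (\<psi> s T)) \<le> 17/18" unfolding ip_def
          by (rule fin_bound[OF finite_qbasis norm1[OF s'(2) order.refl] norm1[OF s'(1) order.refl] p1 q1])
        then show ?thesis by (subst ip_cnj) simp
      qed
    qed
    then show ?thesis by simp
  qed
  have cS: "0 < card ?S" by (simp add: card_gt_0_iff Pow_not_empty)
  define c where "c = real (card ?S)"
  have c0: "0 < c" using cS by (simp add: c_def)
  have h1: "c * real N - 4 * (real T * c) \<le> W T" using prog[of T] by (simp add: c_def algebra_simps)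
  have h2: "W T \<le> (c * real N) * (17/18)" using fin by (simp add: c_def algebra_simps)
  have "c * real N \<le> 72 * (real T * c)" using h1 h2 by linarith
  then have "c * real N \<le> c * (72 * real T)" by (simp add: algebra_simps)
  then show ?thesis using c0 by simp
qed




definition vtx :: "nat \<Rightarrow> bool \<Rightarrow> nat" where "vtx c p = 2*c + (if p then 1 else 0)"

lemma vtx_div[simp]: "vtx c p div 2 = c" by (simp add: vtx_def)
lemma vtx_odd[simp]: "odd (vtx c p) = p" by (simp add: vtx_def)
lemma vtx_eq[simp]: "vtx c p = vtx c' p' \<longleftrightarrow> c = c' \<and> p = p'"
proof
  assume h: "vtx c p = vtx c' p'"
  have "vtx c p div 2 = vtx c' p' div 2" "odd (vtx c p) = odd (vtx c' p')" using h by simp_all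
  then show "c = c' \<and> p = p'" by simp
qed simp
lemma vtx_decomp: "vtx (v div 2) (odd v) = v" by (simp add: vtx_def)
lemma vtx_le: "vtx c p \<le> 2*c+1" "2*c \<le> vtx c p" by (auto simp: vtx_def)

definition lft :: "nat set \<Rightarrow> nat \<Rightarrow> nat" where
  "lft s v = vtx (v div 2 - 1) (odd v \<noteq> (v div 2 - 1 \<in> s))"
definition rgt :: "nat set \<Rightarrow> nat \<Rightarrow> nat" where
  "rgt s v = vtx (Suc (v div 2)) (odd v \<noteq> (v div 2 \<in> s))"
definition DD :: "nat \<Rightarrow> nat \<Rightarrow> nat" where
  "DD N v = (if v = 0 \<or> v = 2*N then 1 else if v < 2*N+2 then 2 else 0)"
definition FF :: "nat \<Rightarrow> nat set \<Rightarrow> nat \<Rightarrow> nat \<Rightarrow> nat" where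
  "FF N s v j = (if v = 0 then rgt s v else if v = 1 then (if j = 0 then rgt s v else 2*N+1)
     else if v = 2*N then lft s v else if v = 2*N+1 then (if j = 0 then lft s v else 1)
     else (if j = 0 then lft s v else rgt s v))"

lemma ex_less2: "(\<exists>k<2::nat. P k) \<longleftrightarrow> P 0 \<or> P 1"
proof
  assume "\<exists>k<2::nat. P k" then show "P 0 \<or> P 1" using less_2_cases by auto
next
  assume "P 0 \<or> P 1"
  then show "\<exists>k<2::nat. P k"
  proof
    assume "P 0" then show ?thesis by (intro exI[of _ 0]) simp
  next
    assume "P 1" then show ?thesis by (intro exI[of _ 1]) simp
  qed
qed
lemma ex_less1: "(\<exists>k<1::nat. P k) \<longleftrightarrow> P 0" by auto

lemma adj_char:
  assumes N: "2 \<le> N"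
  shows "adj_edge (DD N) (FF N s) i j \<longleftrightarrow> i < 2*N+2 \<and>
     ((i div 2 < N \<and> j = rgt s i) \<or> (0 < i div 2 \<and> j = lft s i) \<or> (i = 1 \<and> j = 2*N+1) \<or> (i = 2*N+1 \<and> j = 1))"
proof -
  have "i = 0 \<or> i = 1 \<or> i = 2*N \<or> i = 2*N+1 \<or> (2 \<le> i \<and> i < 2*N) \<or> 2*N+2 \<le> i" by linarith
  moreover
  { assume "i = 0" then have ?thesis using N by (auto simp: adj_edge_def DD_def FF_def) }
  moreover
  { assume "i = 1" then have ?thesis using N by (auto simp: adj_edge_def DD_def FF_def ex_less2) }
  moreover
  { assume i: "i = 2*N" then have "i div 2 = N" by simp
    then have ?thesis using N i by (auto simp: adj_edge_def DD_def FF_def) }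
  moreover
  { assume i: "i = 2*N+1" then have "i div 2 = N" by simp
    then have ?thesis using N i by (auto simp: adj_edge_def DD_def FF_def ex_less2) }
  moreover
  { assume i: "2 \<le> i \<and> i < 2*N" then have "0 < i div 2" "i div 2 < N" by auto
    then have ?thesis using N i by (auto simp: adj_edge_def DD_def FF_def ex_less2) }
  moreover
  { assume i: "2*N+2 \<le> i" then have ?thesis using N by (auto simp: adj_edge_def DD_def) }
  ultimately show ?thesis by blast
qed


lemma rgt_div[simp]: "rgt s i div 2 = Suc (i div 2)" by (simp add: rgt_def)
lemma rgt_odd[simp]: "odd (rgt s i) = (odd i \<noteq> (i div 2 \<in> s))" by (simp add: rgt_def)
lemma lft_div[simp]: "lft s i div 2 = i div 2 - 1" by (simp add: lft_def)
lemma lft_odd[simp]: "odd (lft s i) = (odd i \<noteq> (i div 2 - 1 \<in> s))" by (simp add: lft_def)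
lemma boolx: "((even (i::nat) = X) = (\<not> X)) = odd i" by auto
lemma lft_rgt[simp]: "lft s (rgt s i) = i"
  by (simp add: lft_def boolx vtx_decomp)
lemma rgt_lft: "0 < i div 2 \<Longrightarrow> rgt s (lft s i) = i"
  by (simp add: rgt_def boolx vtx_decomp)
lemma rgt_le: "rgt s i \<le> 2 * Suc (i div 2) + 1" unfolding rgt_def by (rule vtx_le)
lemma lft_le: "lft s i \<le> 2 * (i div 2 - 1) + 1" unfolding lft_def by (rule vtx_le)

lemma E_sym:
  assumes N: "2 \<le> N" and e: "adj_edge (DD N) (FF N s) i j"
  shows "adj_edge (DD N) (FF N s) j i \<and> i \<noteq> j \<and> j < 2*N+2 \<and> i < 2*N+2"
proof -
  have i: "i < 2*N+2" using e adj_char[OF N] by blast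
  then have cN: "i div 2 \<le> N" by simp
  have "(i div 2 < N \<and> j = rgt s i) \<or> (0 < i div 2 \<and> j = lft s i) \<or> (i = 1 \<and> j = 2*N+1) \<or> (i = 2*N+1 \<and> j = 1)"
    using e adj_char[OF N] by blast
  moreover
  { assume h: "i div 2 < N" "j = rgt s i"
    have "j < 2*N+2" using rgt_le[of s i] h by simp
    moreover have "i \<noteq> j" using h by (metis rgt_div n_not_Suc_n)
    moreover have "adj_edge (DD N) (FF N s) j i" using h \<open>j < 2*N+2\<close> by (simp add: adj_char[OF N])
    ultimately have ?thesis using i by blast }
  moreover
  { assume h: "0 < i div 2" "j = lft s i"
    have "j < 2*N+2" using lft_le[of s i] h cN by simp
    moreover have "i \<noteq> j" using h by (metis lft_div diff_less less_one less_irrefl)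
    moreover have "i div 2 - 1 < N" using h cN by linarith
    moreover have "adj_edge (DD N) (FF N s) j i" using h \<open>j < 2*N+2\<close> \<open>i div 2 - 1 < N\<close> rgt_lft[of i s]
      by (simp add: adj_char[OF N])
    ultimately have ?thesis using i by blast }
  moreover
  { assume h: "i = 1 \<and> j = 2*N+1 \<or> i = 2*N+1 \<and> j = 1"
    then have ?thesis using N by (auto simp: adj_char[OF N]) }
  ultimately show ?thesis by blast
qed

lemma inj2: "f 0 \<noteq> f (1::nat) \<Longrightarrow> inj_on f {..<2}"
  by (auto simp: inj_on_def dest!: less_2_cases)

lemma inj_small: "d \<le> 1 \<Longrightarrow> inj_on f {..<d::nat}"
  by (auto simp: inj_on_def)

lemma FF_adj: "k < DD N i \<Longrightarrow> adj_edge (DD N) (FF N s) i (FF N s i k)"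
  by (auto simp: adj_edge_def)

lemma FF_adj_array:
  assumes N: "2 \<le> N" and n: "2*N+2 \<le> n"
  shows "adj_array n (DD N) (FF N s)"
  unfolding adj_array_def
proof (intro conjI allI impI)
  fix i assume "n \<le> i" then show "DD N i = 0" using n by (simp add: DD_def)
next
  fix i assume "i < n"
  show "inj_on (FF N s i) {..<DD N i}"
  proof (cases "DD N i \<le> 1")
    case True then show ?thesis by (rule inj_small)
  next
    case False
    then have d2: "DD N i = 2" "i \<noteq> 0" "i \<noteq> 2*N" "i < 2*N+2" by (auto simp: DD_def split: if_splits)
    have "FF N s i 0 \<noteq> FF N s i 1"
    proof -
      have "i = 1 \<or> i = 2*N+1 \<or> (2 \<le> i \<and> i < 2*N)" using d2 by linarith
      moreover
      { assume "i = 1"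
        then have ?thesis using rgt_le[of s 1] N by (simp add: FF_def) }
      moreover
      { assume h: "i = 2*N+1"
        then have "2*(N-1) \<le> lft s i" unfolding lft_def using vtx_le(2) by simp
        then have ?thesis using h N by (simp add: FF_def) }
      moreover
      { assume h: "2 \<le> i \<and> i < 2*N"
        have "lft s i div 2 \<noteq> rgt s i div 2" by simp
        then have "lft s i \<noteq> rgt s i" by metis
        then have ?thesis using h by (simp add: FF_def) }
      ultimately show ?thesis by blast
    qed
    then show ?thesis using d2 by (simp add: inj2)
  qed
next
  fix i assume "i < n"
  show "FF N s i ` {..<DD N i} \<subseteq> {..<n}"
  proof
    fix j assume "j \<in> FF N s i ` {..<DD N i}"
    then obtain k where k: "k < DD N i" "j = FF N s i k" by auto
    then have "j < 2*N+2" using E_sym[OF N FF_adj[where s=s, OF k(1)]] by simp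
    then show "j \<in> {..<n}" using n by simp
  qed
next
  fix i k assume "i < n" and k: "k < DD N i"
  show "FF N s i k \<noteq> i" using E_sym[OF N FF_adj[where s=s, OF k]] by simp
next
  fix i k assume "i < n" and k: "k < DD N i"
  have "adj_edge (DD N) (FF N s) (FF N s i k) i" using E_sym[OF N FF_adj[where s=s, OF k]] by simp
  then show "\<exists>k'<DD N (FF N s i k). FF N s (FF N s i k) k' = i" by (simp add: adj_edge_def)
qed


definition strand :: "nat set \<Rightarrow> nat \<Rightarrow> bool" where "strand s c = odd (card (s \<inter> {..<c}))"

lemma strand0[simp]: "strand s 0 = False" by (simp add: strand_def)
lemma strandSuc: "strand s (Suc c) = (strand s c \<noteq> (c \<in> s))"
proof (cases "c \<in> s")
  case True
  then have "s \<inter> {..<Suc c} = insert c (s \<inter> {..<c})" by auto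
  then show ?thesis using True by (simp add: strand_def)
next
  case False
  then have "s \<inter> {..<Suc c} = s \<inter> {..<c}" by (auto simp: less_Suc_eq)
  then show ?thesis using False by (simp add: strand_def)
qed
lemma strandN: "s \<subseteq> {..<N} \<Longrightarrow> strand s N = odd (card s)"
  by (simp add: strand_def Int_absorb2)

definition ppos :: "nat \<Rightarrow> nat set \<Rightarrow> nat \<Rightarrow> nat" where
  "ppos N s v = (if odd v = strand s (v div 2) then v div 2 else N + 1 + v div 2)"

lemma ppos_edge:
  assumes N: "2 \<le> N" and s: "s \<subseteq> {..<N}" and o: "odd (card s)"
    and e: "adj_edge (DD N) (FF N s) i j"
  shows "ppos N s j = Suc (ppos N s i) \<or> ppos N s i = Suc (ppos N s j)"
proof -
  have "(i div 2 < N \<and> j = rgt s i) \<or> (0 < i div 2 \<and> j = lft s i) \<or> (i = 1 \<and> j = 2*N+1) \<or> (i = 2*N+1 \<and> j = 1)"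
    using e adj_char[OF N] by blast
  moreover
  { assume h: "j = rgt s i"
    have "(odd j = strand s (j div 2)) = (odd i = strand s (i div 2))" using h by (auto simp: strandSuc)
    then have ?thesis using h by (simp add: ppos_def) }
  moreover
  { assume h: "0 < i div 2" "j = lft s i"
    then have c: "i div 2 = Suc (i div 2 - 1)" by simp
    have "strand s (i div 2) = (strand s (i div 2 - 1) \<noteq> (i div 2 - 1 \<in> s))" by (subst c, rule strandSuc)
    then have "(odd j = strand s (j div 2)) = (odd i = strand s (i div 2))" using h by auto
    then have ?thesis using h c by (auto simp: ppos_def) }
  moreover
  { assume h: "i = 1 \<and> j = 2*N+1 \<or> i = 2*N+1 \<and> j = 1"
    have qn: "strand s N" using strandN[OF s] o by simp
    have "ppos N s 1 = N + 1" by (simp add: ppos_def)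
    moreover have "ppos N s (2*N+1) = N" using qn by (simp add: ppos_def)
    ultimately have ?thesis using h by auto }
  ultimately show ?thesis by blast
qed

lemma ppos_inj: "inj_on (ppos N s) {..<2*N+2}"
proof (rule inj_onI)
  fix v w assume v: "v \<in> {..<2*N+2}" and w: "w \<in> {..<2*N+2}" and e: "ppos N s v = ppos N s w"
  have cv: "v div 2 \<le> N" "w div 2 \<le> N" using v w by auto
  have "v div 2 = w div 2 \<and> (odd v = strand s (v div 2)) = (odd w = strand s (w div 2))"
    using e cv by (auto simp: ppos_def split: if_splits)
  then have "v div 2 = w div 2 \<and> odd v = odd w" by auto
  then have "vtx (v div 2) (odd v) = vtx (w div 2) (odd w)" by (simp only: vtx_eq)
  then show "v = w" by (simp only: vtx_decomp)
qed

lemma no_cycle: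
  assumes edge: "\<And>u w. E u w \<Longrightarrow> u \<in> Dm \<and> w \<in> Dm \<and> (\<pi> w = Suc (\<pi> u) \<or> \<pi> u = Suc (\<pi> w))"
    and inj: "inj_on \<pi> Dm"
  shows "\<not> graph_has_cycle E"
proof
  assume "graph_has_cycle E"
  then obtain vs where L: "length vs \<ge> 3" "distinct vs"
    and cons: "\<forall>i. i+1 < length vs \<longrightarrow> E (vs!i) (vs!(i+1))" and cl: "E (last vs) (hd vs)"
    unfolding graph_has_cycle_def by blast
  define L where "L = length vs"
  have L3: "3 \<le> L" using L by (simp add: L_def)
  define M where "M = Min (\<pi> ` set vs)"
  have ne: "set vs \<noteq> {}" using L by auto
  have "M \<in> \<pi> ` set vs" unfolding M_def using ne by (intro Min_in) auto
  then obtain i0 where i0: "i0 < L" "\<pi> (vs!i0) = M" by (auto simp: in_set_conv_nth L_def)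
  have minM: "M \<le> \<pi> (vs!i)" if "i < L" for i
    unfolding M_def using that by (intro Min_le) (auto simp: L_def)
  have lastv: "last vs = vs ! (L - 1)" using ne by (simp add: L_def last_conv_nth)
  have hdv: "hd vs = vs ! 0" using ne by (simp add: hd_conv_nth)
  define a where "a = (if i0 + 1 < L then i0 + 1 else 0)"
  define b where "b = (if 0 < i0 then i0 - 1 else L - 1)"
  have aL: "a < L" using L3 by (simp add: a_def)
  have bL: "b < L" using L3 i0 unfolding b_def by auto
  have Ea: "E (vs!i0) (vs!a)"
  proof (cases "i0 + 1 < L")
    case True then show ?thesis using cons by (simp add: a_def L_def)
  next
    case False then have "i0 = L - 1" using i0 by simp
    then show ?thesis using cl lastv hdv False by (simp add: a_def)
  qed
  have Eb: "E (vs!b) (vs!i0)"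
  proof (cases "0 < i0")
    case True then have "b + 1 = i0" by (simp add: b_def)
    then show ?thesis using cons i0 True by (auto simp: L_def)
  next
    case False then have "i0 = 0" by simp
    then show ?thesis using cl lastv hdv False by (simp add: b_def)
  qed
  have pa: "\<pi> (vs!a) = Suc M" using edge[OF Ea] minM[OF aL] i0 by auto
  have pb: "\<pi> (vs!b) = Suc M" using edge[OF Eb] minM[OF bL] i0 by auto
  have "vs!a = vs!b" using inj pa pb edge[OF Ea] edge[OF Eb] by (metis inj_on_def)
  then have "a = b" using L(2) aL bL by (simp add: nth_eq_iff_index_eq L_def)
  then show False using L3 i0 by (auto simp: a_def b_def split: if_splits)
qed

lemma bip_of_ppos:
  assumes "\<And>u w. E u w \<Longrightarrow> \<pi> w = Suc (\<pi> u) \<or> \<pi> u = Suc (\<pi> (w::nat))"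
  shows "graph_bipartite E"
  unfolding graph_bipartite_def
proof (intro exI allI impI)
  fix i j assume "E i j"
  then have "\<pi> j = Suc (\<pi> i) \<or> \<pi> i = Suc (\<pi> j)" by (rule assms)
  then show "(i \<in> {v. even (\<pi> v)}) = (j \<notin> {v. even (\<pi> v)})" by auto
qed

lemma odd_cycle_not_bip:
  assumes o: "odd (length vs)" and cons: "\<forall>i. i+1 < length vs \<longrightarrow> E (vs!i) (vs!(i+1))"
    and cl: "E (last vs) (hd vs)" and ne: "vs \<noteq> []"
  shows "\<not> graph_bipartite E"
proof
  assume "graph_bipartite E"
  then obtain S where S: "\<forall>i j. E i j \<longrightarrow> (i \<in> S \<longleftrightarrow> j \<notin> S)" by (auto simp: graph_bipartite_def)
  have alt: "k < length vs \<Longrightarrow> (vs!k \<in> S \<longleftrightarrow> (vs!0 \<in> S \<longleftrightarrow> even k))" for k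
  proof (induction k)
    case 0 then show ?case by simp
  next
    case (Suc k)
    then have "E (vs!k) (vs!(Suc k))" using cons by simp
    then show ?case using S Suc by auto
  qed
  have "last vs = vs ! (length vs - 1)" "hd vs = vs ! 0" using ne by (simp_all add: last_conv_nth hd_conv_nth)
  moreover have "even (length vs - 1)" using o ne by simp
  moreover have "length vs - 1 < length vs" using ne by simp
  ultimately show False using alt[of "length vs - 1"] S cl by auto
qed



lemma cyc_list:
  assumes N: "2 \<le> N" and s: "s \<subseteq> {..<N}" and ev: "even (card s)"
  defines "vs \<equiv> map (\<lambda>c. vtx c (\<not> strand s c)) [0..<Suc N]"
  shows "length vs = Suc N" "distinct vs"
    "\<forall>i. i+1 < length vs \<longrightarrow> adj_edge (DD N) (FF N s) (vs!i) (vs!(i+1))"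
    "adj_edge (DD N) (FF N s) (last vs) (hd vs)"
proof -
  show "length vs = Suc N" by (simp add: vs_def)
  show "distinct vs" unfolding vs_def
    by (simp add: distinct_map inj_on_def del: upt_Suc)
  show "\<forall>i. i+1 < length vs \<longrightarrow> adj_edge (DD N) (FF N s) (vs!i) (vs!(i+1))"
  proof (intro allI impI)
    fix i assume "i + 1 < length vs"
    then have i: "i < N" by (simp add: vs_def)
    have v1: "vs!i = vtx i (\<not> strand s i)" using i by (simp add: vs_def nth_append del: upt_Suc)
    have v2: "vs!(i+1) = vtx (Suc i) (\<not> strand s (Suc i))" using i by (simp add: vs_def del: upt_Suc)
    have lt: "vtx i (\<not> strand s i) < 2*N+2" using vtx_le(1)[of i "\<not> strand s i"] i by simp
    have r: "rgt s (vtx i (\<not> strand s i)) = vtx (Suc i) (\<not> strand s (Suc i))"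
      by (simp add: rgt_def strandSuc)
    show "adj_edge (DD N) (FF N s) (vs!i) (vs!(i+1))"
      unfolding v1 v2 adj_char[OF N] using lt i r by simp
  qed
  have qn: "\<not> strand s N" using strandN[OF s] ev by simp
  have "last vs = vs ! N" by (simp add: vs_def last_conv_nth del: upt_Suc)
  also have "\<dots> = 2*N+1" using qn by (simp add: vs_def vtx_def del: upt_Suc)
  finally have l: "last vs = 2*N+1" .
  have h: "hd vs = 1" by (simp add: vs_def hd_conv_nth vtx_def del: upt_Suc)
  show "adj_edge (DD N) (FF N s) (last vs) (hd vs)" unfolding l h adj_char[OF N] by simp
qed

lemma props:
  assumes N: "2 \<le> N" and evN: "even N" and s: "s \<subseteq> {..<N}"
  shows "graph_bipartite (adj_edge (DD N) (FF N s)) \<longleftrightarrow> odd (card s)"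
    and "graph_has_cycle (adj_edge (DD N) (FF N s)) \<longleftrightarrow> even (card s)"
proof -
  have "(graph_bipartite (adj_edge (DD N) (FF N s)) \<longleftrightarrow> odd (card s)) \<and>
        (graph_has_cycle (adj_edge (DD N) (FF N s)) \<longleftrightarrow> even (card s))"
  proof (cases "odd (card s)")
    case True
    have b: "graph_bipartite (adj_edge (DD N) (FF N s))"
      by (rule bip_of_ppos[where \<pi> = "ppos N s"]) (rule ppos_edge[OF N s True])
    have c: "\<not> graph_has_cycle (adj_edge (DD N) (FF N s))"
    proof (rule no_cycle[where \<pi> = "ppos N s" and Dm = "{..<2*N+2}"])
      fix u w assume e: "adj_edge (DD N) (FF N s) u w"
      show "u \<in> {..<2*N+2} \<and> w \<in> {..<2*N+2} \<and> (ppos N s w = Suc (ppos N s u) \<or> ppos N s u = Suc (ppos N s w))"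
        using E_sym[OF N e] ppos_edge[OF N s True e] by simp
    qed (rule ppos_inj)
    show ?thesis using b c True by simp
  next
    case False
    then have ev: "even (card s)" by simp
    note cl = cyc_list[OF N s ev]
    define vs where "vs = map (\<lambda>c. vtx c (\<not> strand s c)) [0..<Suc N]"
    have c: "graph_has_cycle (adj_edge (DD N) (FF N s))"
      unfolding graph_has_cycle_def
      by (rule exI[of _ vs]) (use cl N in \<open>simp add: vs_def\<close>)
    have b: "\<not> graph_bipartite (adj_edge (DD N) (FF N s))"
      by (rule odd_cycle_not_bip[of vs]) (use cl evN in \<open>simp_all add: vs_def\<close>)
    show ?thesis using b c ev by simp
  qed
  then show "graph_bipartite (adj_edge (DD N) (FF N s)) \<longleftrightarrow> odd (card s)"
    and "graph_has_cycle (adj_edge (DD N) (FF N s)) \<longleftrightarrow> even (card s)" by simp_all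
qed

lemma FF_loc:
  assumes "i div 2 \<noteq> k" "i div 2 \<noteq> Suc k"
  shows "FF N s i j = FF N (flip k s) i j"
proof -
  have a: "(i div 2 \<in> flip k s) = (i div 2 \<in> s)" using assms by (auto simp: flip_def)
  have "i div 2 - 1 \<noteq> k" using assms by linarith
  then have b: "(i div 2 - 1 \<in> flip k s) = (i div 2 - 1 \<in> s)" by (auto simp: flip_def)
  have l: "lft (flip k s) i = lft s i" and r: "rgt (flip k s) i = rgt s i"
    using a b by (simp_all add: lft_def rgt_def)
  show ?thesis unfolding FF_def l r ..
qed

lemma card_flip: "s \<subseteq> {..<N} \<Longrightarrow> odd (card (flip k s)) \<longleftrightarrow> even (card s)"
proof -
  assume s: "s \<subseteq> {..<N}"
  then have f: "finite s" using finite_subset by blast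
  show ?thesis
  proof (cases "k \<in> s")
    case True
    have c: "card (flip k s) = card s - 1" "0 < card s" using True f by (auto simp: flip_def card_gt_0_iff)
    then show ?thesis by (cases "card s") auto
  next
    case False
    then show ?thesis using f by (simp add: flip_def)
  qed
qed

lemma main_bound:
  assumes n: "10 \<le> n"
    and PP: "\<forall>N s k. 2 \<le> N \<longrightarrow> even N \<longrightarrow> s \<subseteq> {..<N} \<longrightarrow> k < N \<longrightarrow>
       P (adj_edge (DD N) (FF N s)) \<noteq> P (adj_edge (DD N) (FF N (flip k s)))"
    and dec: "decides_bounded_error n P m T U Acc"
  shows "real T \<ge> 1/288 * real n"
proof -
  define N where "N = 2 * ((n - 2) div 4)"
  have N2: "2 \<le> N" using n unfolding N_def by presburger
  have evN: "even N" unfolding N_def by simp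
  have Nn: "2*N+2 \<le> n" using n unfolding N_def by presburger
  have n4: "n \<le> 4*N" using n unfolding N_def by presburger
  have "real N \<le> 72 * real T"
  proof (rule generic[where F = "FF N" and D = "DD N" and P = P])
    show "\<forall>s\<subseteq>{..<N}. adj_array n (DD N) (FF N s)" using FF_adj_array[OF N2 Nn] by blast
    show "\<forall>s\<subseteq>{..<N}. \<forall>k<N. \<forall>i<n. i \<notin> {i. i div 2 = k \<or> i div 2 = Suc k} \<longrightarrow>
                  (\<forall>j<DD N i. FF N s i j = FF N (flip k s) i j)"
      using FF_loc by blast
    show "\<forall>s\<subseteq>{..<N}. \<forall>k<N. P (adj_edge (DD N) (FF N s)) \<noteq> P (adj_edge (DD N) (FF N (flip k s)))"
      using PP N2 evN by blast
    show "decides_bounded_error n P m T U Acc" by (rule dec)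
    show "0 < N" using N2 by simp
    show "0 < n" using n by simp
  qed
  moreover have "real n \<le> 4 * real N" using n4 by linarith
  ultimately show ?thesis by linarith
qed


theorem lemma3:
  shows "(\<exists>c>0. \<exists>N. \<forall>n\<ge>N. \<forall>m T U Acc.
            decides_bounded_error n graph_bipartite m T U Acc \<longrightarrow> real T \<ge> c * real n) \<and>
         (\<exists>c>0. \<exists>N. \<forall>n\<ge>N. \<forall>m T U Acc.
            decides_bounded_error n graph_has_cycle m T U Acc \<longrightarrow> real T \<ge> c * real n)"
proof (intro conjI)
  have PB: "\<forall>(N::nat) s (k::nat). 2 \<le> N \<longrightarrow> even N \<longrightarrow> s \<subseteq> {..<N} \<longrightarrow> k < N \<longrightarrow>
       graph_bipartite (adj_edge (DD N) (FF N s)) \<noteq> graph_bipartite (adj_edge (DD N) (FF N (flip k s)))"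
  proof (intro allI impI)
    fix N :: nat and s :: "nat set" and k :: nat assume N: "2 \<le> N" "even N" and s: "s \<subseteq> {..<N}" and k: "k < N"
    have s': "flip k s \<subseteq> {..<N}" using flip_sub[OF s k] .
    show "graph_bipartite (adj_edge (DD N) (FF N s)) \<noteq> graph_bipartite (adj_edge (DD N) (FF N (flip k s)))"
      using props(1)[OF N s] props(1)[OF N s'] card_flip[OF s, of k] by simp
  qed
  have PC: "\<forall>(N::nat) s (k::nat). 2 \<le> N \<longrightarrow> even N \<longrightarrow> s \<subseteq> {..<N} \<longrightarrow> k < N \<longrightarrow>
       graph_has_cycle (adj_edge (DD N) (FF N s)) \<noteq> graph_has_cycle (adj_edge (DD N) (FF N (flip k s)))"
  proof (intro allI impI)
    fix N :: nat and s :: "nat set" and k :: nat assume N: "2 \<le> N" "even N" and s: "s \<subseteq> {..<N}" and k: "k < N"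
    have s': "flip k s \<subseteq> {..<N}" using flip_sub[OF s k] .
    show "graph_has_cycle (adj_edge (DD N) (FF N s)) \<noteq> graph_has_cycle (adj_edge (DD N) (FF N (flip k s)))"
      using props(2)[OF N s] props(2)[OF N s'] card_flip[OF s, of k] by simp
  qed
  show "\<exists>c>0. \<exists>N. \<forall>n\<ge>N. \<forall>m T U Acc.
            decides_bounded_error n graph_bipartite m T U Acc \<longrightarrow> real T \<ge> c * real n"
    using main_bound[OF _ PB] by (intro exI[of _ "1/288"] conjI exI[of _ 10]) auto
  show "\<exists>c>0. \<exists>N. \<forall>n\<ge>N. \<forall>m T U Acc.
            decides_bounded_error n graph_has_cycle m T U Acc \<longrightarrow> real T \<ge> c * real n"
    using main_bound[OF _ PC] by (intro exI[of _ "1/288"] conjI exI[of _ 10]) auto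
qed

end
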